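(* Under the setting of Theorem 2, let $d_{\min}=\min_{1\le s<j\le r+1}(\lambda_s-\lambda_j)$. Then: if $(i_1,\dots,i_r)=(1,\dots,r)$, $\lambda_{\min}(\mathrm{hess}\,g(\mathbf{X}_\Omega))\ge\tfrac12 d_{\min}$; if $\{i_1,\dots,i_r\}=\{1,\dots,r\}$ but $(i_1,\dots,i_r)\ne(1,\dots,r)$, $\lambda_{\min}(\mathrm{hess}\,g(\mathbf{X}_\Omega))\le-\tfrac12 d_{\min}$; if $\{i_1,\dots,i_r\}\ne\{1,\dots,r\}$, $\lambda_{\min}(\mathrm{hess}\,g(\mathbf{X}_\Omega))\le-d_{\min}$.
   Context: $\mathbf{M}\in\mathbb{R}^{N\times N}$ symmetric with eigenvalues $\lambda_1>\cdots>\lambda_r>\lambda_{r+1}\ge\cdots\ge\lambda_N$ and orthonormal eigenvectors $\bm{x}_1,\dots,\bm{x}_N$; for distinct $i_1,\dots,i_r\in[N]$, $\mathbf{X}_\Omega=[\bm{x}_{i_1},\dots,\bm{x}_{i_r}]$. $\mathrm{St}(N,r)=\{\mathbf{X}:\mathbf{X}^\top\mathbf{X}=\mathbf{I}_r\}$, $\mathbf{N}=\mathrm{diag}(r,r-1,\dots,1)$, $g(\mathbf{X})=-\tfrac12\mathrm{tr}(\mathbf{X}^\top\mathbf{M}\mathbf{X}\mathbf{N})$. $\mathcal{T}_{\mathbf{X}}\mathrm{St}(N,r)=\{\mathbf{U}:\mathbf{X}^\top\mathbf{U}+\mathbf{U}^\top\mathbf{X}=\mathbf{0}\}$; $\mathrm{hess}\,g(\mathbf{X})[\mathbf{U},\mathbf{U}]=\langle\mathbf{X}^\top\mathbf{M}\mathbf{X},\mathbf{U}^\top\mathbf{U}\mathbf{N}\rangle-\langle\mathbf{M},\mathbf{U}\mathbf{N}\mathbf{U}^\top\rangle$,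 and $\lambda_{\min}(\mathrm{hess}\,g(\mathbf{X}))=\min\{\mathrm{hess}\,g(\mathbf{X})[\mathbf{U},\mathbf{U}]:\mathbf{U}\in\mathcal{T}_{\mathbf{X}}\mathrm{St}(N,r),\|\mathbf{U}\|_F=1\}$. *)

theory Defs
  imports "Jordan_Normal_Form.Matrix"
begin

text \<open>Matrices are Jordan_Normal_Form matrices (real mat); all indices are 0-based:
  paper index k (1..N) corresponds to index k-1 here.\<close>

definition mtrace :: "real mat \<Rightarrow> real" where
  "mtrace A = (\<Sum>i<dim_row A. A $$ (i,i))"

definition frob_inner :: "real mat \<Rightarrow> real mat \<Rightarrow> real" where
  "frob_inner A B = mtrace (transpose_mat A * B)"

definition Nmat :: "nat \<Rightarrow> real mat" where
  "Nmat r = mat r r (\<lambda>(i,j). if i = j then real (r - i) else 0)"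

definition tangent_St :: "nat \<Rightarrow> nat \<Rightarrow> real mat \<Rightarrow> real mat set" where
  "tangent_St n r X = {U. U \<in> carrier_mat n r \<and>
      transpose_mat X * U + transpose_mat U * X = 0\<^sub>m r r}"

definition hess_g :: "real mat \<Rightarrow> nat \<Rightarrow> real mat \<Rightarrow> real mat \<Rightarrow> real" where
  "hess_g M r X U = frob_inner (transpose_mat X * M * X) (transpose_mat U * U * Nmat r)
                    - frob_inner M (U * Nmat r * transpose_mat U)"

text \<open>Smallest eigenvalue of the Riemannian Hessian: minimum of the quadratic form
  over unit-Frobenius-norm tangent vectors.\<close>
definition lambda_min_hess :: "real mat \<Rightarrow> nat \<Rightarrow> nat \<Rightarrow> real mat \<Rightarrow> real" where
  "lambda_min_hess M n r X =
     Inf {hess_g M r X U | U. U \<in> tangent_St n r X \<and> frob_inner U U = 1}"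

definition X_Omega :: "nat \<Rightarrow> nat \<Rightarrow> (nat \<Rightarrow> real vec) \<Rightarrow> (nat \<Rightarrow> nat) \<Rightarrow> real mat" where
  "X_Omega n r x idx = mat n r (\<lambda>(a,b). x (idx b) $ a)"

text \<open>d_min = min over 1 <= s < j <= r+1 of (lambda_s - lambda_j); 0-based: s < j <= r.\<close>
definition d_min :: "(nat \<Rightarrow> real) \<Rightarrow> nat \<Rightarrow> real" where
  "d_min lam r = Min {lam s - lam j | s j. s < j \<and> j \<le> r}"

end

theory Submission
  imports Defs "Jordan_Normal_Form.Determinant"
begin


lemma mtrace_comm:
  assumes A: "A \<in> carrier_mat a b" and B: "B \<in> carrier_mat b a"
  shows "mtrace (A * B) = mtrace (B * A)"
proof -
  have "mtrace (A*B) = (\<Sum>i<a. \<Sum>k<b. A $$ (i,k) * B $$ (k,i))"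
    using A B by (simp add: mtrace_def scalar_prod_def atLeast0LessThan)
  also have "\<dots> = (\<Sum>k<b. \<Sum>i<a. B $$ (k,i) * A $$ (i,k))"
    by (subst sum.swap) (simp add: mult.commute)
  also have "\<dots> = mtrace (B*A)"
    using A B by (simp add: mtrace_def scalar_prod_def atLeast0LessThan)
  finally show ?thesis .
qed

lemma frob_entry:
  assumes A: "A \<in> carrier_mat m k" and B: "B \<in> carrier_mat m k"
  shows "frob_inner A B = (\<Sum>i<m. \<Sum>j<k. A $$ (i,j) * B $$ (i,j))"
proof -
  have "frob_inner A B = (\<Sum>j<k. \<Sum>i<m. A $$ (i,j) * B $$ (i,j))"
    using A B by (simp add: frob_inner_def mtrace_def scalar_prod_def atLeast0LessThan)
  also have "\<dots> = (\<Sum>i<m. \<Sum>j<k. A $$ (i,j) * B $$ (i,j))"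
    by (rule sum.swap)
  finally show ?thesis .
qed

lemma sum_delta_r: "finite A \<Longrightarrow> (\<Sum>c\<in>A. f c * (if c = a then g c else 0)) = (if a \<in> A then f a * (g a :: real) else 0)"
proof -
  assume "finite A"
  have "(\<Sum>c\<in>A. f c * (if c = a then g c else 0)) = (\<Sum>c\<in>A. if a = c then f a * g a else 0)"
    by (rule sum.cong) auto
  thus ?thesis using \<open>finite A\<close> by simp
qed

lemma sum_delta_l: "finite A \<Longrightarrow> (\<Sum>c\<in>A. (if a = c then g c else 0) * f c) = (if a \<in> A then g a * (f a :: real) else 0)"
proof -
  assume "finite A"
  have "(\<Sum>c\<in>A. (if a = c then g c else 0) * f c) = (\<Sum>c\<in>A. if a = c then g a * f a else 0)"
    by (rule sum.cong) auto
  thus ?thesis using \<open>finite A\<close> by simp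
qed

lemma sum_delta_l2: "finite A \<Longrightarrow> (\<Sum>c\<in>A. (if c = a then g c else 0) * f c) = (if a \<in> A then g a * (f a :: real) else 0)"
proof -
  assume "finite A"
  have "(\<Sum>c\<in>A. (if c = a then g c else 0) * f c) = (\<Sum>c\<in>A. if a = c then g a * f a else 0)"
    by (rule sum.cong) auto
  thus ?thesis using \<open>finite A\<close> by simp
qed

definition Qm :: "nat \<Rightarrow> (nat \<Rightarrow> real vec) \<Rightarrow> real mat" where
  "Qm n x = mat n n (\<lambda>(a,k). x k $ a)"
definition Dm :: "nat \<Rightarrow> (nat \<Rightarrow> real) \<Rightarrow> real mat" where
  "Dm n lam = mat n n (\<lambda>(i,j). if i = j then lam i else 0)"
definition Pm :: "nat \<Rightarrow> nat \<Rightarrow> (nat \<Rightarrow> nat) \<Rightarrow> real mat" where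
  "Pm n r idx = mat n r (\<lambda>(k,b). if k = idx b then 1 else 0)"

locale hs =
  fixes n r :: nat and M :: "real mat" and lam :: "nat \<Rightarrow> real"
    and x :: "nat \<Rightarrow> real vec" and idx :: "nat \<Rightarrow> nat"
  assumes M_carrier: "M \<in> carrier_mat n n" and M_sym: "transpose_mat M = M"
    and x_carrier: "\<And>i. i < n \<Longrightarrow> x i \<in> carrier_vec n"
    and x_eig: "\<And>i. i < n \<Longrightarrow> M *\<^sub>v x i = lam i \<cdot>\<^sub>v x i"
    and x_orth: "\<And>i j. i < n \<Longrightarrow> j < n \<Longrightarrow> x i \<bullet> x j = (if i = j then 1 else 0)"
    and idx_range: "\<And>k. k < r \<Longrightarrow> idx k < n"
    and idx_inj: "inj_on idx {..<r}"
begin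

lemma Q_car: "Qm n x \<in> carrier_mat n n" by (simp add: Qm_def)
lemma D_car: "Dm n lam \<in> carrier_mat n n" by (simp add: Dm_def)
lemma P_car: "Pm n r idx \<in> carrier_mat n r" by (simp add: Pm_def)
lemma N_car: "Nmat r \<in> carrier_mat r r" by (simp add: Nmat_def)

lemma dims[simp]: "dim_row (Qm n x) = n" "dim_col (Qm n x) = n"
  "dim_row (Dm n lam) = n" "dim_col (Dm n lam) = n"
  "dim_row (Pm n r idx) = n" "dim_col (Pm n r idx) = r"
  "dim_row (Nmat r) = r" "dim_col (Nmat r) = r"
  by (auto simp: Qm_def Dm_def Pm_def Nmat_def)

lemma col_Q: "k < n \<Longrightarrow> col (Qm n x) k = x k"
  using x_carrier[of k] by (intro eq_vecI) (auto simp: Qm_def)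

lemma QtQ: "transpose_mat (Qm n x) * Qm n x = 1\<^sub>m n"
  by (rule eq_matI) (auto simp: Q_car col_Q x_orth)

lemma QQt: "Qm n x * transpose_mat (Qm n x) = 1\<^sub>m n"
  by (rule mat_mult_left_right_inverse[OF _ Q_car QtQ]) (simp add: Qm_def)

lemma MQ: "M * Qm n x = Qm n x * Dm n lam"
proof (rule eq_matI)
  fix i j assume i: "i < dim_row (Qm n x * Dm n lam)" and j: "j < dim_col (Qm n x * Dm n lam)"
  hence i: "i < n" and j: "j < n" by (auto simp: Qm_def Dm_def)
  have "(M * Qm n x) $$ (i,j) = (M *\<^sub>v x j) $ i"
    using i j M_carrier by (simp add: col_Q)
  also have "\<dots> = lam j * x j $ i" using x_eig[OF j] x_carrier[OF j] i by simp
  also have "\<dots> = (Qm n x * Dm n lam) $$ (i,j)"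
    using i j by (simp add: Qm_def Dm_def scalar_prod_def atLeast0LessThan
       if_distrib cong: if_cong)
  finally show "(M * Qm n x) $$ (i,j) = (Qm n x * Dm n lam) $$ (i,j)" .
qed (use M_carrier in \<open>auto simp: Qm_def Dm_def\<close>)

lemma QtMQ: "transpose_mat (Qm n x) * M * Qm n x = Dm n lam"
proof -
  have "transpose_mat (Qm n x) * M * Qm n x = transpose_mat (Qm n x) * (M * Qm n x)"
    using Q_car M_carrier by (simp add: assoc_mult_mat[of _ n n _ n _ n])
  also have "\<dots> = transpose_mat (Qm n x) * (Qm n x * Dm n lam)" by (simp add: MQ)
  also have "\<dots> = (transpose_mat (Qm n x) * Qm n x) * Dm n lam"
    using Q_car D_car by (simp add: assoc_mult_mat[of _ n n _ n _ n])
  finally show ?thesis using QtQ D_car by simp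
qed

lemma XQP: "X_Omega n r x idx = Qm n x * Pm n r idx"
proof (rule eq_matI)
  fix i j assume i: "i < dim_row (Qm n x * Pm n r idx)" and j: "j < dim_col (Qm n x * Pm n r idx)"
  hence i: "i < n" and j: "j < r" by (auto simp: Qm_def Pm_def)
  show "X_Omega n r x idx $$ (i,j) = (Qm n x * Pm n r idx) $$ (i,j)"
    using i j idx_range[OF j]
    by (simp add: X_Omega_def Qm_def Pm_def scalar_prod_def atLeast0LessThan
       if_distrib cong: if_cong)
qed (auto simp: X_Omega_def Qm_def Pm_def)


lemma PDP_entry:
  assumes a: "a < r" and b: "b < r"
  shows "(transpose_mat (Pm n r idx) * Dm n lam * Pm n r idx) $$ (a,b) = (if a = b then lam (idx a) else 0)"
proof -
  have e: "(Dm n lam * Pm n r idx) $$ (k,b) = (if k = idx b then lam k else 0)" if k: "k < n" for k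
    using k b idx_range[OF b] by (simp add: Dm_def Pm_def scalar_prod_def atLeast0LessThan sum_delta_l)
  have "(transpose_mat (Pm n r idx) * Dm n lam * Pm n r idx) $$ (a,b)
      = (transpose_mat (Pm n r idx) * (Dm n lam * Pm n r idx)) $$ (a,b)"
    using P_car D_car by (simp add: assoc_mult_mat[of _ r n _ n _ r])
  also have "\<dots> = (\<Sum>k<n. (if k = idx a then 1 else 0) * (Dm n lam * Pm n r idx) $$ (k,b))"
    using a b P_car D_car by (simp add: scalar_prod_def atLeast0LessThan Pm_def)
  also have "\<dots> = (\<Sum>k<n. (if k = idx a then (if k = idx b then lam k else 0) else 0))"
    by (rule sum.cong) (auto simp: e)
  also have "\<dots> = (if idx a = idx b then lam (idx a) else 0)"
    using idx_range[OF a] by (simp add: if_distrib[symmetric] cong: if_cong) 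
  also have "\<dots> = (if a = b then lam (idx a) else 0)"
    using idx_inj a b by (auto simp: inj_on_def)
  finally show ?thesis .
qed

lemma VVN_entry:
  assumes V: "V \<in> carrier_mat n r" and a: "a < r"
  shows "(transpose_mat V * V * Nmat r) $$ (a,a) = (\<Sum>k<n. (V $$ (k,a))^2) * real (r - a)"
proof -
  have "(transpose_mat V * V * Nmat r) $$ (a,a) = (\<Sum>c<r. (transpose_mat V * V) $$ (a,c) * (if c = a then real (r - c) else 0))"
    using V a by (simp add: scalar_prod_def atLeast0LessThan Nmat_def)
  also have "\<dots> = (transpose_mat V * V) $$ (a,a) * real (r - a)"
    using a by (simp add: sum_delta_r)
  also have "(transpose_mat V * V) $$ (a,a) = (\<Sum>k<n. (V $$ (k,a))^2)"
    using V a by (simp add: scalar_prod_def atLeast0LessThan power2_eq_square)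
  finally show ?thesis .
qed

lemma VNV_entry:
  assumes V: "V \<in> carrier_mat n r" and i: "i < n"
  shows "(V * Nmat r * transpose_mat V) $$ (i,i) = (\<Sum>b<r. real (r - b) * (V $$ (i,b))^2)"
proof -
  have e: "(V * Nmat r) $$ (i,b) = V $$ (i,b) * real (r - b)" if b: "b < r" for b
  proof -
    have "(V * Nmat r) $$ (i,b) = (\<Sum>c<r. V $$ (i,c) * (if c = b then real (r - c) else 0))"
      using V i b by (simp add: scalar_prod_def atLeast0LessThan Nmat_def)
    also have "\<dots> = V $$ (i,b) * real (r - b)"
      using b by (simp add: sum_delta_r)
    finally show ?thesis .
  qed
  have "(V * Nmat r * transpose_mat V) $$ (i,i) = (\<Sum>b<r. (V * Nmat r) $$ (i,b) * V $$ (i,b))"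
    using V i by (simp add: scalar_prod_def atLeast0LessThan)
  also have "\<dots> = (\<Sum>b<r. real (r - b) * (V $$ (i,b))^2)"
    by (rule sum.cong) (auto simp: e power2_eq_square)
  finally show ?thesis .
qed


lemma QtQ_mult:
  assumes V: "V \<in> carrier_mat n k" and W: "W \<in> carrier_mat n l"
  shows "transpose_mat (Qm n x * V) * (Qm n x * W) = transpose_mat V * W"
proof -
  have "transpose_mat (Qm n x * V) = transpose_mat V * transpose_mat (Qm n x)"
    using Q_car V by (rule transpose_mult)
  hence "transpose_mat (Qm n x * V) * (Qm n x * W) = transpose_mat V * (transpose_mat (Qm n x) * (Qm n x * W))"
    using V W Q_car by (simp add: assoc_mult_mat[of _ k n _ n _ l])
  also have "transpose_mat (Qm n x) * (Qm n x * W) = W"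
    using V W Q_car by (simp add: assoc_mult_mat[of _ n n _ n _ l, symmetric] QtQ)
  finally show ?thesis .
qed

lemma QV: "U \<in> carrier_mat n r \<Longrightarrow> Qm n x * (transpose_mat (Qm n x) * U) = U"
  using Q_car by (simp add: assoc_mult_mat[of _ n n _ n _ r, symmetric] QQt)

lemma XtMX: "transpose_mat (X_Omega n r x idx) * M * X_Omega n r x idx
    = transpose_mat (Pm n r idx) * Dm n lam * Pm n r idx"
proof -
  let ?Q = "Qm n x" and ?P = "Pm n r idx" and ?D = "Dm n lam"
  have "M * (?Q * ?P) = (M * ?Q) * ?P"
    using M_carrier Q_car P_car by (simp add: assoc_mult_mat[of _ n n _ n _ r])
  also have "\<dots> = ?Q * (?D * ?P)" 
    using Q_car D_car P_car by (simp add: MQ assoc_mult_mat[of _ n n _ n _ r])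
  finally have 1: "M * (?Q * ?P) = ?Q * (?D * ?P)" .
  have "transpose_mat (?Q * ?P) * M * (?Q * ?P) = transpose_mat (?Q * ?P) * (M * (?Q * ?P))"
    using M_carrier Q_car P_car by (simp add: assoc_mult_mat[of _ r n _ n _ r])
  also have "\<dots> = transpose_mat ?P * (?D * ?P)" unfolding 1
    by (rule QtQ_mult[OF P_car]) (use D_car P_car in auto)
  also have "\<dots> = transpose_mat ?P * ?D * ?P"
    using D_car P_car by (simp add: assoc_mult_mat[of _ r n _ n _ r])
  finally show ?thesis by (simp add: XQP)
qed

lemma MUNU:
  assumes V: "V \<in> carrier_mat n r"
  shows "frob_inner M (Qm n x * V * Nmat r * transpose_mat (Qm n x * V))
      = frob_inner (Dm n lam) (V * Nmat r * transpose_mat V)"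
proof -
  let ?Q = "Qm n x" and ?D = "Dm n lam" and ?Y = "V * Nmat r * transpose_mat V"
  have VN: "V * Nmat r \<in> carrier_mat n r" using V N_car by simp
  have Vt: "transpose_mat V \<in> carrier_mat r n" using V by simp
  have Y: "?Y \<in> carrier_mat n n" by (rule mult_carrier_mat[OF VN Vt])
  have Qt: "transpose_mat ?Q \<in> carrier_mat n n" using Q_car by simp
  have VtQt: "transpose_mat V * transpose_mat ?Q \<in> carrier_mat r n" using V Q_car by simp
  have t: "transpose_mat (?Q * V) = transpose_mat V * transpose_mat ?Q"
    using Q_car V by (rule transpose_mult)
  have MQ_car: "M * ?Q \<in> carrier_mat n n" using M_carrier Q_car by simp
  have MQY: "M * ?Q * ?Y \<in> carrier_mat n n" using M_carrier Q_car Y by simp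
  have "?Q * V * Nmat r * transpose_mat (?Q * V) = (?Q * (V * Nmat r)) * (transpose_mat V * transpose_mat ?Q)"
    unfolding t using V Q_car N_car by (simp only: assoc_mult_mat[OF Q_car V N_car])
  also have "\<dots> = ?Q * ((V * Nmat r) * (transpose_mat V * transpose_mat ?Q))"
    by (rule assoc_mult_mat[OF Q_car VN VtQt])
  also have "(V * Nmat r) * (transpose_mat V * transpose_mat ?Q) = ?Y * transpose_mat ?Q"
    by (rule assoc_mult_mat[OF VN Vt Qt, symmetric])
  also have "?Q * (?Y * transpose_mat ?Q) = ?Q * ?Y * transpose_mat ?Q"
    by (rule assoc_mult_mat[OF Q_car Y Qt, symmetric])
  finally have e: "?Q * V * Nmat r * transpose_mat (?Q * V) = ?Q * ?Y * transpose_mat ?Q" .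
  have QY: "?Q * ?Y \<in> carrier_mat n n" using Q_car Y by simp
  have DT: "transpose_mat ?D = ?D"
    by (rule eq_matI) (auto simp: Dm_def)
  have s1: "M * (?Q * ?Y * transpose_mat ?Q) = (M * ?Q * ?Y) * transpose_mat ?Q"
    by (simp only: assoc_mult_mat[OF M_carrier QY Qt, symmetric] assoc_mult_mat[OF M_carrier Q_car Y, symmetric])
  have s2: "transpose_mat ?Q * (M * ?Q * ?Y) = (transpose_mat ?Q * M * ?Q) * ?Y"
    by (simp only: assoc_mult_mat[OF Qt M_carrier Q_car, symmetric] assoc_mult_mat[OF Qt MQ_car Y, symmetric])
  have "frob_inner M (?Q * V * Nmat r * transpose_mat (?Q * V)) = mtrace (M * (?Q * ?Y * transpose_mat ?Q))"
    by (simp only: e frob_inner_def M_sym)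
  also have "\<dots> = mtrace (transpose_mat ?Q * (M * ?Q * ?Y))"
    unfolding s1 by (rule mtrace_comm[OF MQY Qt])
  also have "\<dots> = mtrace (?D * ?Y)" unfolding s2 QtMQ ..
  also have "\<dots> = frob_inner ?D ?Y" unfolding frob_inner_def DT ..
  finally show ?thesis .
qed


lemma UtU:
  assumes U: "U \<in> carrier_mat n r"
  shows "transpose_mat U * U = transpose_mat (transpose_mat (Qm n x) * U) * (transpose_mat (Qm n x) * U)"
proof -
  have V: "transpose_mat (Qm n x) * U \<in> carrier_mat n r"
    using U Q_car by (intro mult_carrier_mat[of _ n n]) auto
  show ?thesis using QtQ_mult[OF V V] QV[OF U] by simp
qed

lemma frob_formula:
  assumes U: "U \<in> carrier_mat n r"
  defines "V \<equiv> transpose_mat (Qm n x) * U"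
  shows "frob_inner U U = (\<Sum>k<n. \<Sum>b<r. (V $$ (k,b))^2)"
proof -
  have V: "V \<in> carrier_mat n r"
    unfolding V_def using U Q_car by (intro mult_carrier_mat[of _ n n]) auto
  have "frob_inner U U = frob_inner V V"
    unfolding frob_inner_def UtU[OF U] V_def ..
  also have "\<dots> = (\<Sum>k<n. \<Sum>b<r. (V $$ (k,b))^2)"
    by (simp add: frob_entry[OF V V] power2_eq_square)
  finally show ?thesis .
qed

lemma hess_formula:
  assumes U: "U \<in> carrier_mat n r"
  defines "V \<equiv> transpose_mat (Qm n x) * U"
  shows "hess_g M r (X_Omega n r x idx) U
     = (\<Sum>k<n. \<Sum>b<r. real (r - b) * (lam (idx b) - lam k) * (V $$ (k,b))^2)"
proof -
  have V: "V \<in> carrier_mat n r"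
    unfolding V_def using U Q_car by (intro mult_carrier_mat[of _ n n]) auto
  have UQV: "U = Qm n x * V" unfolding V_def using QV[OF U] by simp
  have Vt: "transpose_mat V \<in> carrier_mat r n" using V by simp
  have VV: "transpose_mat V * V \<in> carrier_mat r r" by (rule mult_carrier_mat[OF Vt V])
  have VVN: "transpose_mat V * V * Nmat r \<in> carrier_mat r r" by (rule mult_carrier_mat[OF VV N_car])
  have VN: "V * Nmat r \<in> carrier_mat n r" by (rule mult_carrier_mat[OF V N_car])
  have VNV: "V * Nmat r * transpose_mat V \<in> carrier_mat n n" by (rule mult_carrier_mat[OF VN Vt])
  have Pt: "transpose_mat (Pm n r idx) \<in> carrier_mat r n" using P_car by simp
  have PD: "transpose_mat (Pm n r idx) * Dm n lam \<in> carrier_mat r n" by (rule mult_carrier_mat[OF Pt D_car])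
  have PDP: "transpose_mat (Pm n r idx) * Dm n lam * Pm n r idx \<in> carrier_mat r r"
    by (rule mult_carrier_mat[OF PD P_car])
  have h: "hess_g M r (X_Omega n r x idx) U
     = frob_inner (transpose_mat (Pm n r idx) * Dm n lam * Pm n r idx) (transpose_mat V * V * Nmat r)
       - frob_inner (Dm n lam) (V * Nmat r * transpose_mat V)"
    unfolding hess_g_def XtMX UtU[OF U] MUNU[OF V, symmetric] V_def[symmetric] UQV[symmetric] ..
  have t1: "frob_inner (transpose_mat (Pm n r idx) * Dm n lam * Pm n r idx) (transpose_mat V * V * Nmat r)
      = (\<Sum>a<r. lam (idx a) * ((\<Sum>k<n. (V $$ (k,a))^2) * real (r - a)))"
  proof -
    have "frob_inner (transpose_mat (Pm n r idx) * Dm n lam * Pm n r idx) (transpose_mat V * V * Nmat r)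
        = (\<Sum>a<r. \<Sum>b<r. (if a = b then lam (idx b) else 0) * (transpose_mat V * V * Nmat r) $$ (a,b))"
      unfolding frob_entry[OF PDP VVN] by (intro sum.cong refl) (auto simp: PDP_entry simp del: index_mult_mat)
    also have "\<dots> = (\<Sum>a<r. lam (idx a) * (transpose_mat V * V * Nmat r) $$ (a,a))"
      by (simp add: sum_delta_l)
    also have "\<dots> = (\<Sum>a<r. lam (idx a) * ((\<Sum>k<n. (V $$ (k,a))^2) * real (r - a)))"
      by (intro sum.cong refl) (simp add: VVN_entry[OF V])
    finally show ?thesis .
  qed
  have t2: "frob_inner (Dm n lam) (V * Nmat r * transpose_mat V)
      = (\<Sum>i<n. lam i * (\<Sum>b<r. real (r - b) * (V $$ (i,b))^2))"
  proof -
    have "frob_inner (Dm n lam) (V * Nmat r * transpose_mat V)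
        = (\<Sum>i<n. \<Sum>j<n. (if i = j then lam j else 0) * (V * Nmat r * transpose_mat V) $$ (i,j))"
      unfolding frob_entry[OF D_car VNV] by (intro sum.cong refl) (simp add: Dm_def)
    also have "\<dots> = (\<Sum>i<n. lam i * (V * Nmat r * transpose_mat V) $$ (i,i))"
      by (simp add: sum_delta_l)
    also have "\<dots> = (\<Sum>i<n. lam i * (\<Sum>b<r. real (r - b) * (V $$ (i,b))^2))"
      by (intro sum.cong refl) (simp add: VNV_entry[OF V])
    finally show ?thesis .
  qed
  have t1': "(\<Sum>a<r. lam (idx a) * ((\<Sum>k<n. (V $$ (k,a))^2) * real (r - a)))
      = (\<Sum>k<n. \<Sum>b<r. real (r - b) * lam (idx b) * (V $$ (k,b))^2)"
    by (subst sum.swap) (simp add: sum_distrib_left sum_distrib_right mult_ac)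
  have t2': "(\<Sum>i<n. lam i * (\<Sum>b<r. real (r - b) * (V $$ (i,b))^2))
      = (\<Sum>k<n. \<Sum>b<r. real (r - b) * lam k * (V $$ (k,b))^2)"
    by (simp add: sum_distrib_left mult_ac)
  show ?thesis unfolding h t1 t2 t1' t2'
    by (simp add: sum_subtractf[symmetric] algebra_simps)
qed

lemma tangent_iff:
  assumes U: "U \<in> carrier_mat n r"
  defines "V \<equiv> transpose_mat (Qm n x) * U"
  shows "U \<in> tangent_St n r (X_Omega n r x idx) \<longleftrightarrow>
    (\<forall>a<r. \<forall>b<r. V $$ (idx a, b) + V $$ (idx b, a) = 0)"
proof -
  have V: "V \<in> carrier_mat n r"
    unfolding V_def using U Q_car by (intro mult_carrier_mat[of _ n n]) auto
  have UQV: "U = Qm n x * V" unfolding V_def using QV[OF U] by simp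
  have e1: "transpose_mat (X_Omega n r x idx) * U = transpose_mat (Pm n r idx) * V"
    unfolding XQP UQV by (rule QtQ_mult[OF P_car V])
  have e2: "transpose_mat U * X_Omega n r x idx = transpose_mat V * Pm n r idx"
    unfolding XQP UQV by (rule QtQ_mult[OF V P_car])
  have S: "transpose_mat (X_Omega n r x idx) * U + transpose_mat U * X_Omega n r x idx
     = mat r r (\<lambda>(a,b). V $$ (idx a, b) + V $$ (idx b, a))"
    unfolding e1 e2
  proof (rule eq_matI)
    fix a b assume a: "a < dim_row (mat r r (\<lambda>(a,b). V $$ (idx a, b) + V $$ (idx b, a)))"
      and b: "b < dim_col (mat r r (\<lambda>(a,b). V $$ (idx a, b) + V $$ (idx b, a)))"
    hence a: "a < r" and b: "b < r" by auto
    have 1: "(transpose_mat (Pm n r idx) * V) $$ (a,b) = V $$ (idx a, b)"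
      using a b V idx_range[OF a] by (simp add: Pm_def scalar_prod_def atLeast0LessThan sum_delta_l2)
    have 2: "(transpose_mat V * Pm n r idx) $$ (a,b) = V $$ (idx b, a)"
      using a b V idx_range[OF b] by (simp add: Pm_def scalar_prod_def atLeast0LessThan sum_delta_r)
    show "(transpose_mat (Pm n r idx) * V + transpose_mat V * Pm n r idx) $$ (a,b)
        = mat r r (\<lambda>(a,b). V $$ (idx a, b) + V $$ (idx b, a)) $$ (a,b)"
      using a b V by (simp add: 1 2)
  qed (use V in auto)
  have "U \<in> tangent_St n r (X_Omega n r x idx) \<longleftrightarrow> mat r r (\<lambda>(a,b). V $$ (idx a, b) + V $$ (idx b, a)) = 0\<^sub>m r r"
    unfolding tangent_St_def using U by (simp only: S mem_Collect_eq simp_thms)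
  also have "\<dots> \<longleftrightarrow> (\<forall>a<r. \<forall>b<r. V $$ (idx a, b) + V $$ (idx b, a) = 0)"
    by (auto simp: mat_eq_iff)
  finally show ?thesis .
qed

end


lemma sum2_point:
  fixes h :: "nat \<Rightarrow> nat \<Rightarrow> real"
  assumes "p < n" "q < r"
  shows "(\<Sum>k<n. \<Sum>b<r. h k b * (if k = p \<and> b = q then t else 0)) = h p q * t"
proof -
  have "(\<Sum>k<n. \<Sum>b<r. h k b * (if k = p \<and> b = q then t else 0))
      = (\<Sum>k<n. \<Sum>b<r. h k b * (if b = q then (if k = p then t else 0) else 0))"
    by (intro sum.cong refl) auto
  also have "\<dots> = (\<Sum>k<n. h k q * (if k = p then t else 0))"
    using assms by (simp add: sum_delta_r)
  also have "\<dots> = h p q * t" using assms by (simp add: sum_delta_r)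
  finally show ?thesis .
qed

locale hs2 = hs +
  assumes r_pos: "1 \<le> r" and r_lt: "r < n"
    and lam_strict: "\<And>s. s < r \<Longrightarrow> lam s > lam (Suc s)"
    and lam_rest: "\<And>j. r \<le> j \<Longrightarrow> Suc j < n \<Longrightarrow> lam j \<ge> lam (Suc j)"
begin

lemma lam_dec: "s < j \<Longrightarrow> j \<le> r \<Longrightarrow> lam j < lam s"
proof (induction j)
  case 0 thus ?case by simp
next
  case (Suc j)
  have a: "lam (Suc j) < lam j" using lam_strict[of j] Suc.prems by simp
  show ?case
  proof (cases "s = j")
    case True thus ?thesis using a by simp
  next
    case False thus ?thesis using Suc a by simp
  qed
qed

lemma lam_tail: "r \<le> k \<Longrightarrow> k < n \<Longrightarrow> lam k \<le> lam r"
proof (induction k)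
  case 0 thus ?case by simp
next
  case (Suc k)
  show ?case
  proof (cases "r = Suc k")
    case True thus ?thesis by simp
  next
    case False
    hence "r \<le> k" using Suc.prems by simp
    thus ?thesis using Suc lam_rest[of k] by simp
  qed
qed

lemma d_fin: "finite {lam s - lam j | s j. s < j \<and> j \<le> r}"
proof -
  have "{lam s - lam j | s j. s < j \<and> j \<le> r} \<subseteq> (\<lambda>(s,j). lam s - lam j) ` ({..r} \<times> {..r})"
    by auto
  thus ?thesis by (rule finite_subset) auto
qed

lemma d_le: "s < j \<Longrightarrow> j \<le> r \<Longrightarrow> d_min lam r \<le> lam s - lam j"
  unfolding d_min_def by (rule Min_le[OF d_fin]) auto

lemma d_pos: "d_min lam r > 0"
proof -
  have ne: "{lam s - lam j | s j. s < j \<and> j \<le> r} \<noteq> {}" using r_pos by auto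
  have "d_min lam r \<in> {lam s - lam j | s j. s < j \<and> j \<le> r}"
    unfolding d_min_def by (rule Min_in[OF d_fin ne])
  then obtain s j where "s < j" "j \<le> r" "d_min lam r = lam s - lam j" by blast
  thus ?thesis using lam_dec[of s j] by simp
qed

definition Fv :: "real mat \<Rightarrow> real" where
  "Fv V = (\<Sum>k<n. \<Sum>b<r. real (r - b) * (lam (idx b) - lam k) * (V $$ (k,b))^2)"

definition Nv :: "real mat \<Rightarrow> real" where
  "Nv V = (\<Sum>k<n. \<Sum>b<r. (V $$ (k,b))^2)"

definition Tv :: "real mat \<Rightarrow> bool" where
  "Tv V = (\<forall>a<r. \<forall>b<r. V $$ (idx a, b) + V $$ (idx b, a) = 0)"

abbreviation SS where "SS \<equiv> {hess_g M r (X_Omega n r x idx) U | U. U \<in> tangent_St n r (X_Omega n r x idx) \<and> frob_inner U U = 1}"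

lemma SS_elim:
  assumes "z \<in> SS"
  shows "\<exists>V. V \<in> carrier_mat n r \<and> Tv V \<and> Nv V = 1 \<and> z = Fv V"
proof -
  obtain U where U: "z = hess_g M r (X_Omega n r x idx) U" "U \<in> tangent_St n r (X_Omega n r x idx)" "frob_inner U U = 1"
    using assms by blast
  have Uc: "U \<in> carrier_mat n r" using U(2) by (simp add: tangent_St_def)
  let ?V = "transpose_mat (Qm n x) * U"
  have "?V \<in> carrier_mat n r" using Uc Q_car by (intro mult_carrier_mat[of _ n n]) auto
  moreover have "Tv ?V" using U(2) tangent_iff[OF Uc] by (simp add: Tv_def)
  moreover have "Nv ?V = 1" using U(3) frob_formula[OF Uc] by (simp add: Nv_def)
  moreover have "z = Fv ?V" using U(1) hess_formula[OF Uc] by (simp add: Fv_def)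
  ultimately show ?thesis by blast
qed

lemma SS_intro:
  assumes V: "V \<in> carrier_mat n r" and "Tv V" and "Nv V = 1"
  shows "Fv V \<in> SS"
proof -
  let ?U = "Qm n x * V"
  have Uc: "?U \<in> carrier_mat n r" using V Q_car by (intro mult_carrier_mat[of _ n n]) auto
  have VV: "transpose_mat (Qm n x) * ?U = V"
    using V Q_car by (simp add: assoc_mult_mat[of _ n n _ n _ r, symmetric] QtQ)
  have "?U \<in> tangent_St n r (X_Omega n r x idx)"
    using tangent_iff[OF Uc] assms Uc by (simp add: VV Tv_def tangent_St_def)
  moreover have "frob_inner ?U ?U = 1" using frob_formula[OF Uc] assms by (simp add: VV Nv_def)
  moreover have "hess_g M r (X_Omega n r x idx) ?U = Fv V" using hess_formula[OF Uc] by (simp add: VV Fv_def)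
  ultimately show ?thesis unfolding mem_Collect_eq by metis
qed


lemma SS_bdd: "bdd_below SS"
proof -
  define L where "L = (\<Sum>i<n. \<bar>lam i\<bar>)"
  define K where "K = real r * (2 * L)"
  have Lb: "\<bar>lam i\<bar> \<le> L" if "i < n" for i
    unfolding L_def using that by (intro member_le_sum) auto
  have coef: "real (r - b) * (lam (idx b) - lam k) \<ge> - K" if b: "b < r" and k: "k < n" for b k
  proof -
    have "\<bar>lam (idx b) - lam k\<bar> \<le> 2 * L" using Lb[OF idx_range[OF b]] Lb[OF k] by linarith
    moreover have "real (r - b) \<le> real r" by simp
    ultimately have "real (r - b) * \<bar>lam (idx b) - lam k\<bar> \<le> real r * (2 * L)"
      by (intro mult_mono) auto
    hence "\<bar>real (r - b) * (lam (idx b) - lam k)\<bar> \<le> K" unfolding K_def by (simp add: abs_mult)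
    thus ?thesis by linarith
  qed
  have "z \<ge> - K" if zS: "z \<in> SS" for z
  proof -
    obtain V where V: "V \<in> carrier_mat n r" "Tv V" "Nv V = 1" "z = Fv V" using SS_elim[OF zS] by blast
    have "Fv V \<ge> (\<Sum>k<n. \<Sum>b<r. - K * (V $$ (k,b))^2)"
      unfolding Fv_def
      by (intro sum_mono mult_right_mono coef) auto
    also have "(\<Sum>k<n. \<Sum>b<r. - K * (V $$ (k,b))^2) = - K * Nv V"
      by (simp add: Nv_def sum_distrib_left)
    finally show ?thesis using V by simp
  qed
  thus ?thesis unfolding bdd_below_def by blast
qed

lemma coef_pair: assumes "k < r" "b < r" "k \<noteq> b"
  shows "(real k - real b) * (lam b - lam k) \<ge> d_min lam r"
proof (cases "b < k")
  case True
  have "lam b - lam k \<ge> d_min lam r" using d_le[of b k] True assms by simp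
  moreover have "(real k - real b - 1) * (lam b - lam k) \<ge> 0"
    using True d_pos calculation by (intro mult_nonneg_nonneg) auto
  ultimately show ?thesis by (simp add: algebra_simps)
next
  case False
  hence kb: "k < b" using assms by simp
  have "lam k - lam b \<ge> d_min lam r" using d_le[of k b] kb assms by simp
  moreover have "(real b - real k - 1) * (lam k - lam b) \<ge> 0"
    using kb d_pos calculation by (intro mult_nonneg_nonneg) auto
  ultimately show ?thesis by (simp add: algebra_simps)
qed

lemma case1:
  assumes id: "\<forall>k<r. idx k = k" and V: "V \<in> carrier_mat n r" and T: "Tv V" and N: "Nv V = 1"
  shows "Fv V \<ge> d_min lam r / 2"
proof -
  define d where "d = d_min lam r"
  define w where "w k b = V $$ (k,b)" for k b
  have skew: "w a b = - w b a" if "a < r" "b < r" for a b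
    using T that id unfolding Tv_def w_def by force
  define f where "f k b = real (r - b) * (lam b - lam k) * (w k b)^2" for k b
  define g where "g k b = real (r - k) * (lam k - lam b) * (w k b)^2" for k b
  have F: "Fv V = (\<Sum>k<n. \<Sum>b<r. f k b)"
    unfolding Fv_def f_def w_def by (intro sum.cong refl) (simp add: id)
  have un: "{..<n} = {..<r} \<union> {r..<n}" using r_lt by auto
  have F2: "Fv V = (\<Sum>k<r. \<Sum>b<r. f k b) + (\<Sum>k\<in>{r..<n}. \<Sum>b<r. f k b)"
    unfolding F un by (rule sum.union_disjoint) auto
  have Nv2: "Nv V = (\<Sum>k<r. \<Sum>b<r. (w k b)^2) + (\<Sum>k\<in>{r..<n}. \<Sum>b<r. (w k b)^2)"
    unfolding Nv_def w_def un by (rule sum.union_disjoint) auto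
  have A1: "(\<Sum>k<r. \<Sum>b<r. f k b) = (\<Sum>k<r. \<Sum>b<r. g k b)"
  proof -
    have "(\<Sum>k<r. \<Sum>b<r. f k b) = (\<Sum>b<r. \<Sum>k<r. f k b)" by (rule sum.swap)
    also have "\<dots> = (\<Sum>k<r. \<Sum>b<r. g k b)"
    proof (intro sum.cong refl)
      fix k b assume "k \<in> {..<r}" "b \<in> {..<r}"
      hence "(w b k)^2 = (w k b)^2" using skew[of b k] by simp
      thus "f b k = g k b" unfolding f_def g_def by simp
    qed
    finally show ?thesis .
  qed
  have A2: "f k b + g k b \<ge> d * (w k b)^2" if "k < r" "b < r" for k b
  proof (cases "k = b")
    case True
    hence "w k b = 0" using skew[of k k] that by simp
    thus ?thesis unfolding f_def g_def by simp
  next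
    case False
    have "f k b + g k b = (real k - real b) * (lam b - lam k) * (w k b)^2"
      unfolding f_def g_def using that by (simp add: of_nat_diff algebra_simps)
    also have "\<dots> \<ge> d * (w k b)^2"
      unfolding d_def by (intro mult_right_mono coef_pair) (use that False in auto)
    finally show ?thesis .
  qed
  have A: "2 * (\<Sum>k<r. \<Sum>b<r. f k b) \<ge> d * (\<Sum>k<r. \<Sum>b<r. (w k b)^2)"
  proof -
    have "2 * (\<Sum>k<r. \<Sum>b<r. f k b) = (\<Sum>k<r. \<Sum>b<r. f k b + g k b)"
      using A1 by (simp add: sum.distrib)
    also have "\<dots> \<ge> (\<Sum>k<r. \<Sum>b<r. d * (w k b)^2)"
      by (intro sum_mono) (auto intro: A2)
    finally show ?thesis by (simp add: sum_distrib_left)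
  qed
  have B: "(\<Sum>k\<in>{r..<n}. \<Sum>b<r. f k b) \<ge> d * (\<Sum>k\<in>{r..<n}. \<Sum>b<r. (w k b)^2)"
  proof -
    have "f k b \<ge> d * (w k b)^2" if "k \<in> {r..<n}" "b < r" for k b
    proof -
      have "lam b - lam r \<ge> d" unfolding d_def using d_le[of b r] that by simp
      moreover have "lam k \<le> lam r" using lam_tail that by simp
      ultimately have c: "lam b - lam k \<ge> d" by simp
      have "real (r - b) \<ge> 1" using that by simp
      moreover have "d > 0" unfolding d_def by (rule d_pos)
      ultimately have "real (r - b) * (lam b - lam k) \<ge> 1 * d"
        using c by (intro mult_mono) auto
      thus ?thesis unfolding f_def by (intro mult_right_mono) auto
    qed
    hence "(\<Sum>k\<in>{r..<n}. \<Sum>b<r. f k b) \<ge> (\<Sum>k\<in>{r..<n}. \<Sum>b<r. d * (w k b)^2)"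
      by (intro sum_mono) auto
    thus ?thesis by (simp add: sum_distrib_left)
  qed
  have Bnn: "(\<Sum>k\<in>{r..<n}. \<Sum>b<r. (w k b)^2) \<ge> 0" by (intro sum_nonneg) auto
  have dpos: "d > 0" unfolding d_def by (rule d_pos)
  define Aw where "Aw = (\<Sum>k<r. \<Sum>b<r. (w k b)^2)"
  define Bw where "Bw = (\<Sum>k\<in>{r..<n}. \<Sum>b<r. (w k b)^2)"
  have B2: "d * Bw \<ge> (d/2) * Bw" unfolding Bw_def using Bnn dpos by (intro mult_right_mono) auto
  have e: "(d/2) * (Aw + Bw) = (d * Aw) / 2 + (d/2) * Bw" by (simp add: algebra_simps)
  have "Fv V \<ge> (d/2) * (Aw + Bw)"
    unfolding F2 e using A B B2 unfolding Aw_def Bw_def by linarith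
  moreover have "Aw + Bw = 1" using N Nv2 unfolding Aw_def Bw_def by simp
  ultimately show ?thesis unfolding d_def by simp
qed


lemma sum2_point1:
  assumes "p < n" "q < r"
  shows "(\<Sum>k<n. \<Sum>b<r. (if k = p \<and> b = q then t else 0)) = (t::real)"
  using sum2_point[of p n q r "\<lambda>_ _. 1" t] assms by simp

lemma inj_eq: "a < r \<Longrightarrow> c < r \<Longrightarrow> idx a = idx c \<longleftrightarrow> a = c"
  using idx_inj by (auto simp: inj_on_def)

lemma inversion:
  assumes im: "idx ` {..<r} = {..<r}" and nid: "\<not> (\<forall>k<r. idx k = k)"
  shows "\<exists>i j. i < j \<and> j < r \<and> idx j < idx i"
proof (rule ccontr)
  assume H: "\<not> ?thesis"
  have le: "idx i < idx j" if "i < j" "j < r" for i j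
  proof -
    have "\<not> idx j < idx i" using H that by blast
    moreover have "idx i \<noteq> idx j" using inj_eq[of i j] that by simp
    ultimately show ?thesis by simp
  qed
  have rng: "idx k < r" if "k < r" for k using im that by auto
  have mono: "idx k + m \<le> idx (k + m)" if "k + m < r" for k m
    using that
  proof (induction m)
    case 0 thus ?case by simp
  next
    case (Suc m)
    hence "idx k + m \<le> idx (k + m)" by simp
    moreover have "idx (k + m) < idx (k + Suc m)" using le[of "k+m" "k + Suc m"] Suc.prems by simp
    ultimately show ?case by simp
  qed
  have "idx k = k" if k: "k < r" for k
  proof -
    have "idx 0 + k \<le> idx k" using mono[of 0 k] k by simp
    moreover have "idx k + (r - 1 - k) \<le> idx (k + (r - 1 - k))" using mono[of k "r - 1 - k"] k by simp
    moreover have "idx (k + (r - 1 - k)) < r" using rng k by simp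
    ultimately show ?thesis using k by linarith
  qed
  thus False using nid by blast
qed

lemma case2:
  assumes im: "idx ` {..<r} = {..<r}" and nid: "\<not> (\<forall>k<r. idx k = k)"
  shows "\<exists>V. V \<in> carrier_mat n r \<and> Tv V \<and> Nv V = 1 \<and> Fv V \<le> - (d_min lam r / 2)"
proof -
  obtain i j where ij: "i < j" "j < r" "idx j < idx i" using inversion[OF im nid] by blast
  have i: "i < r" using ij by simp
  have ii: "idx i < r" using im i by auto
  have ni: "idx i < n" "idx j < n" using i ij idx_range by auto
  have dij: "idx i \<noteq> idx j" using ij by simp
  define c :: real where "c = sqrt (1/2)"
  have c2: "c^2 = 1/2" unfolding c_def by simp
  define V where "V = mat n r (\<lambda>(k,b). if k = idx i \<and> b = j then c else if k = idx j \<and> b = i then - c else 0)"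
  have Vc: "V \<in> carrier_mat n r" unfolding V_def by simp
  have sq: "(V $$ (k,b))^2 = (if k = idx i \<and> b = j then 1/2 else 0) + (if k = idx j \<and> b = i then 1/2 else 0)"
    if "k < n" "b < r" for k b
    using that ij c2 unfolding V_def by auto
  have Tv: "Tv V"
    unfolding Tv_def V_def using ij i idx_range by (auto simp: inj_eq)
  have Nv: "Nv V = 1"
  proof -
    have "Nv V = (\<Sum>k<n. \<Sum>b<r. (if k = idx i \<and> b = j then 1/2 else 0))
        + (\<Sum>k<n. \<Sum>b<r. (if k = idx j \<and> b = i then 1/2 else 0))"
      unfolding Nv_def sum.distrib[symmetric] by (intro sum.cong refl) (auto simp: sq)
    also have "\<dots> = 1" using sum2_point1[of "idx i" j "1/2"] sum2_point1[of "idx j" i "1/2"] ni ij i by simp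
    finally show ?thesis .
  qed
  define co where "co k b = real (r - b) * (lam (idx b) - lam k)" for k b
  have Fv: "Fv V = co (idx i) j * (1/2) + co (idx j) i * (1/2)"
  proof -
    have "Fv V = (\<Sum>k<n. \<Sum>b<r. co k b * (if k = idx i \<and> b = j then 1/2 else 0))
        + (\<Sum>k<n. \<Sum>b<r. co k b * (if k = idx j \<and> b = i then 1/2 else 0))"
      unfolding Fv_def sum.distrib[symmetric] co_def by (intro sum.cong refl) (auto simp: sq algebra_simps)
    also have "\<dots> = co (idx i) j * (1/2) + co (idx j) i * (1/2)"
      using sum2_point[of "idx i" n j r co "1/2"] sum2_point[of "idx j" n i r co "1/2"] ni ij i by simp
    finally show ?thesis .
  qed
  define \<delta> where "\<delta> = lam (idx j) - lam (idx i)"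
  have del: "\<delta> \<ge> d_min lam r" unfolding \<delta>_def using d_le[of "idx j" "idx i"] ij ii by simp
  have dp: "d_min lam r > 0" by (rule d_pos)
  have "Fv V = (real i - real j) * \<delta> / 2"
    unfolding Fv co_def \<delta>_def using ij i by (simp add: of_nat_diff algebra_simps)
  also have "(real i - real j) * \<delta> \<le> - \<delta>"
  proof -
    have "(real j - real i - 1) * \<delta> \<ge> 0" using ij del dp by (intro mult_nonneg_nonneg) auto
    thus ?thesis by (simp add: algebra_simps)
  qed
  hence "(real i - real j) * \<delta> / 2 \<le> - (d_min lam r / 2)" using del by simp
  finally show ?thesis using Vc Tv Nv by blast
qed

lemma case3:
  assumes im: "idx ` {..<r} \<noteq> {..<r}"
  shows "\<exists>V. V \<in> carrier_mat n r \<and> Tv V \<and> Nv V = 1 \<and> Fv V \<le> - d_min lam r"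
proof -
  have card: "card (idx ` {..<r}) = card {..<r}" using idx_inj by (simp add: card_image)
  have "\<not> idx ` {..<r} \<subseteq> {..<r}"
  proof
    assume "idx ` {..<r} \<subseteq> {..<r}"
    hence "idx ` {..<r} = {..<r}" using card by (intro card_subset_eq) auto
    thus False using im by simp
  qed
  then obtain j where j: "j < r" "idx j \<ge> r" by (auto simp: image_subset_iff not_less)
  have "\<not> {..<r} \<subseteq> idx ` {..<r}"
  proof
    assume "{..<r} \<subseteq> idx ` {..<r}"
    hence "{..<r} = idx ` {..<r}" using card by (intro card_subset_eq) auto
    thus False using im by simp
  qed
  then obtain m where m: "m < r" "m \<notin> idx ` {..<r}" by auto
  have mn: "m < n" using m r_lt by simp
  define V where "V = mat n r (\<lambda>(k,b). if k = m \<and> b = j then 1 else (0::real))"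
  have Vc: "V \<in> carrier_mat n r" unfolding V_def by simp
  have sq: "(V $$ (k,b))^2 = (if k = m \<and> b = j then 1 else 0)" if "k < n" "b < r" for k b
    using that unfolding V_def by auto
  have Tv: "Tv V" unfolding Tv_def V_def using m idx_range by force
  have Nv: "Nv V = 1"
  proof -
    have "Nv V = (\<Sum>k<n. \<Sum>b<r. (if k = m \<and> b = j then 1 else 0))"
      unfolding Nv_def by (intro sum.cong refl) (auto simp: sq)
    thus ?thesis using sum2_point1[OF mn j(1), of 1] by simp
  qed
  define co where "co k b = real (r - b) * (lam (idx b) - lam k)" for k b
  have Fv: "Fv V = co m j"
  proof -
    have "Fv V = (\<Sum>k<n. \<Sum>b<r. co k b * (if k = m \<and> b = j then 1 else 0))"
      unfolding Fv_def co_def by (intro sum.cong refl) (auto simp: sq)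
    also have "\<dots> = co m j" using sum2_point[OF mn j(1), of co 1] by simp
    finally show ?thesis .
  qed
  have t1: "lam (idx j) \<le> lam r" using lam_tail j idx_range by simp
  have t2: "lam m - lam r \<ge> d_min lam r" using d_le[of m r] m by simp
  have dp: "d_min lam r > 0" by (rule d_pos)
  define t where "t = lam (idx j) - lam m"
  have tt: "t \<le> - d_min lam r" unfolding t_def using t1 t2 by simp
  have "real (r - j) * t \<le> 1 * t"
    using tt dp j by (intro mult_right_mono_neg) auto
  hence "co m j \<le> - d_min lam r" unfolding co_def t_def[symmetric] using tt by simp
  thus ?thesis using Vc Tv Nv Fv by auto
qed


lemma final:
  shows "((\<forall>k<r. idx k = k) \<longrightarrow>
            lambda_min_hess M n r (X_Omega n r x idx) \<ge> d_min lam r / 2)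
       \<and> ((idx ` {..<r} = {..<r} \<and> \<not> (\<forall>k<r. idx k = k)) \<longrightarrow>
            lambda_min_hess M n r (X_Omega n r x idx) \<le> - (d_min lam r / 2))
       \<and> (idx ` {..<r} \<noteq> {..<r} \<longrightarrow>
            lambda_min_hess M n r (X_Omega n r x idx) \<le> - d_min lam r)"
proof (intro conjI impI)
  assume id: "\<forall>k<r. idx k = k"
  define V where "V = mat n r (\<lambda>(k,b). if k = r \<and> b = 0 then 1 else (0::real))"
  have Vc: "V \<in> carrier_mat n r" unfolding V_def by simp
  have Tv: "Tv V" unfolding Tv_def V_def using id idx_range by force
  have Nv: "Nv V = 1"
  proof -
    have "Nv V = (\<Sum>k<n. \<Sum>b<r. (if k = r \<and> b = 0 then 1 else 0))"
      unfolding Nv_def V_def by (intro sum.cong refl) auto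
    thus ?thesis using sum2_point1[of r 0 1] r_lt r_pos by simp
  qed
  have ne: "SS \<noteq> {}" using SS_intro[OF Vc Tv Nv] by blast
  show "lambda_min_hess M n r (X_Omega n r x idx) \<ge> d_min lam r / 2"
    unfolding lambda_min_hess_def
  proof (rule cInf_greatest[OF ne])
    fix z assume "z \<in> SS"
    then obtain V where "V \<in> carrier_mat n r" "Tv V" "Nv V = 1" "z = Fv V" using SS_elim by blast
    thus "d_min lam r / 2 \<le> z" using case1[OF id] by simp
  qed
next
  assume "idx ` {..<r} = {..<r} \<and> \<not> (\<forall>k<r. idx k = k)"
  then obtain V where V: "V \<in> carrier_mat n r" "Tv V" "Nv V = 1" "Fv V \<le> - (d_min lam r / 2)"
    using case2 by blast
  have "Inf SS \<le> Fv V" by (rule cInf_lower[OF SS_intro[OF V(1-3)] SS_bdd])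
  thus "lambda_min_hess M n r (X_Omega n r x idx) \<le> - (d_min lam r / 2)"
    unfolding lambda_min_hess_def using V(4) by simp
next
  assume "idx ` {..<r} \<noteq> {..<r}"
  then obtain V where V: "V \<in> carrier_mat n r" "Tv V" "Nv V = 1" "Fv V \<le> - d_min lam r"
    using case3 by blast
  have "Inf SS \<le> Fv V" by (rule cInf_lower[OF SS_intro[OF V(1-3)] SS_bdd])
  thus "lambda_min_hess M n r (X_Omega n r x idx) \<le> - d_min lam r"
    unfolding lambda_min_hess_def using V(4) by simp
qed

end

theorem mainTheorem4:
  fixes n r :: nat and M :: "real mat" and lam :: "nat \<Rightarrow> real"
    and x :: "nat \<Rightarrow> real vec" and idx :: "nat \<Rightarrow> nat"
  assumes r_pos: "1 \<le> r" and r_lt: "r < n"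
    and M_carrier: "M \<in> carrier_mat n n" and M_sym: "transpose_mat M = M"
    and x_carrier: "\<And>i. i < n \<Longrightarrow> x i \<in> carrier_vec n"
    and x_eig: "\<And>i. i < n \<Longrightarrow> M *\<^sub>v x i = lam i \<cdot>\<^sub>v x i"
    and x_orth: "\<And>i j. i < n \<Longrightarrow> j < n \<Longrightarrow> x i \<bullet> x j = (if i = j then 1 else 0)"
    and lam_strict: "\<And>s. s < r \<Longrightarrow> lam s > lam (Suc s)"
    and lam_rest: "\<And>j. r \<le> j \<Longrightarrow> Suc j < n \<Longrightarrow> lam j \<ge> lam (Suc j)"
    and idx_range: "\<And>k. k < r \<Longrightarrow> idx k < n"
    and idx_inj: "inj_on idx {..<r}"
  shows "((\<forall>k<r. idx k = k) \<longrightarrow>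
            lambda_min_hess M n r (X_Omega n r x idx) \<ge> d_min lam r / 2)
       \<and> ((idx ` {..<r} = {..<r} \<and> \<not> (\<forall>k<r. idx k = k)) \<longrightarrow>
            lambda_min_hess M n r (X_Omega n r x idx) \<le> - (d_min lam r / 2))
       \<and> (idx ` {..<r} \<noteq> {..<r} \<longrightarrow>
            lambda_min_hess M n r (X_Omega n r x idx) \<le> - d_min lam r)"
  proof -
  interpret hs2 n r M lam x idx
    by (unfold_locales; (rule assms)?; simp add: assms)
  show ?thesis by (rule final)
qed

end
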